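(* Let $n\ge3$ be odd and let $0<q<q_o$, where $q_o=\frac{\sqrt{414-66\sqrt{33}}}{16}\approx0.3690$. Let $\omega=(nq,\ldots,nq,-nq,\ldots,-nq,0)\in\mathbb{R}^n$ (with $(n-1)/2$ entries equal to $nq$, then $(n-1)/2$ entries equal to $-nq$, then a final entry $0$) and $k=(n,\ldots,n)$. Then the number of equilibria $\theta\in(-\pi,\pi]^n$ satisfying $$\omega_\nu=\frac1n\sum_{\mu=1}^nk_\nu k_\mu\sin(\theta_\nu-\theta_\mu)\ (\nu=1,\ldots,n),\qquad \sum_{\mu=1}^nk_\mu e^{i\theta_\mu}\in\mathbb{R}_{\ge0},$$ is $2^n-\binom{n-1}{(n-1)/2}$. *)

theory Defs
  imports Complex_Main
begin

definition kuramoto_equilibria ::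
  "nat \<Rightarrow> (nat \<Rightarrow> real) \<Rightarrow> (nat \<Rightarrow> real) \<Rightarrow> real list set" where
  "kuramoto_equilibria n \<omega> k =
     {\<theta>. length \<theta> = n \<and> (\<forall>\<nu><n. -pi < \<theta> ! \<nu> \<and> \<theta> ! \<nu> \<le> pi)
        \<and> (\<forall>\<nu><n. \<omega> \<nu> = (1 / real n) * (\<Sum>\<mu><n. k \<nu> * k \<mu> * sin (\<theta> ! \<nu> - \<theta> ! \<mu>)))
        \<and> (\<Sum>\<mu><n. complex_of_real (k \<mu>) * exp (\<i> * complex_of_real (\<theta> ! \<mu>))) \<in> complex_of_real ` {0..}}"

definition q_o :: real where
  "q_o = sqrt (414 - 66 * sqrt 33) / 16"

definition omega_alt :: "nat \<Rightarrow> real \<Rightarrow> nat \<Rightarrow> real" where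
  "omega_alt n q \<nu> =
     (if \<nu> < (n - 1) div 2 then real n * q
      else if \<nu> < n - 1 then - (real n * q) else 0)"

end

theory Submission
  imports Defs
begin

definition gg :: "real \<Rightarrow> real \<Rightarrow> real \<Rightarrow> real" where
  "gg t e a = (t * cos a + e) * sin a"

definition gd :: "real \<Rightarrow> real \<Rightarrow> real \<Rightarrow> real" where
  "gd t e a = t * (2 * (cos a)^2 - 1) + e * cos a"

lemma gg_deriv: "(gg t e has_real_derivative gd t e a) (at a)"
proof -
  have "(gg t e has_real_derivative ((t * - sin a) * sin a + (t * cos a + e) * cos a)) (at a)"
    unfolding gg_def by (auto intro!: derivative_eq_intros)
  moreover have h: "sin a * sin a = 1 - cos a * cos a"
    using sin_cos_squared_add[of a] by (simp add: power2_eq_square)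
  have "(t * - sin a) * sin a + (t * cos a + e) * cos a = gd t e a"
    unfolding gd_def by (simp add: algebra_simps power2_eq_square h)
  ultimately show ?thesis by simp
qed

lemma gg_cont: "continuous_on S (gg t e)"
  unfolding gg_def by (intro continuous_intros)

lemma p_factor:
  fixes t e x y :: real
  assumes "y > 0" "2*t*y^2 + e*y - t = 0"
  shows "2*t*x^2 + e*x - t = t*(x-y)*(2*x + 1/y)"
proof -
  have e: "e = (t - 2*t*y^2)/y" using assms by (simp add: field_simps) 
  show ?thesis unfolding e using assms(1) by (simp add: field_simps power2_eq_square) (simp add: algebra_simps)?
qed

lemma inc_from_deriv:
  fixes f f' :: "real \<Rightarrow> real"
  assumes d: "\<And>x. (f has_real_derivative f' x) (at x)"
    and pos: "\<And>x. a < x \<Longrightarrow> x < b \<Longrightarrow> f' x > 0"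
    and "a \<le> x" "x < y" "y \<le> b"
  shows "f x < f y"
proof (rule DERIV_pos_imp_increasing_open[OF \<open>x < y\<close>])
  fix z assume "x < z" "z < y"
  then show "\<exists>w. DERIV f z :> w \<and> w > 0" using d pos assms(3,5) by force
next
  show "continuous_on {x..y} f" using d
    by (meson DERIV_isCont continuous_at_imp_continuous_on)
qed

lemma dec_from_deriv:
  fixes f f' :: "real \<Rightarrow> real"
  assumes d: "\<And>x. (f has_real_derivative f' x) (at x)"
    and neg: "\<And>x. a < x \<Longrightarrow> x < b \<Longrightarrow> f' x < 0"
    and "a \<le> x" "x < y" "y \<le> b"
  shows "f x > f y"
proof -
  have "(\<lambda>z. - f z) x < (\<lambda>z. - f z) y"
    by (rule inc_from_deriv[where f'="\<lambda>z. - f' z" and a=a and b=b])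
       (use assms in \<open>auto intro!: derivative_eq_intros\<close>)
  then show ?thesis by simp
qed

lemma crit:
  fixes t e :: real
  assumes "t \<noteq> 0" "t * (t + e) > 0"
  shows "\<exists>c. 0 < c \<and> c < pi/2 \<and> (\<forall>a. 0 < a \<longrightarrow> a < c \<longrightarrow> t * gd t e a > 0)
            \<and> (\<forall>a. c < a \<longrightarrow> a < pi/2 \<longrightarrow> t * gd t e a < 0)"
proof -
  define p where "p x = t * (2*t*x^2 + e*x - t)" for x
  have "p 0 < 0" using assms(1) by (simp add: p_def zero_less_mult_iff) linarith
  moreover have "p 1 > 0" using assms(2) by (simp add: p_def algebra_simps)
  moreover have "continuous_on {0..1} p" unfolding p_def by (intro continuous_intros)
  ultimately obtain y where y: "0 \<le> y" "y \<le> 1" "p y = 0"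
    using IVT'[of p 0 0 1] by force
  have "y \<noteq> 0" using \<open>p 0 < 0\<close> y by auto
  have "y \<noteq> 1" using \<open>p 1 > 0\<close> y by auto
  have y0: "2*t*y^2 + e*y - t = 0" using y(3) assms(1) by (simp add: p_def)
  define c where "c = arccos y"
  have "0 < c" "c < pi/2" unfolding c_def
    using y \<open>y \<noteq> 0\<close> \<open>y \<noteq> 1\<close> arccos_lt_bounded[of y] arccos_less_arccos[of 0 y]
    by (auto simp: arccos_0)
  have cc: "cos c = y" unfolding c_def using y by simp
  have key0: "gd t e a = t * (cos a - y) * (2 * cos a + 1/y)" for a
    using p_factor[of y t e "cos a"] y0 y \<open>y \<noteq> 0\<close>
    by (simp add: gd_def algebra_simps)
  have key: "t * gd t e a = t * t * (cos a - y) * (2 * cos a + 1/y)" for a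
    unfolding key0 by (simp add: mult.assoc)
  have tt: "t * t > 0" using assms(1) by (cases "t > 0") (auto intro: mult_pos_pos mult_neg_neg)
  show ?thesis
  proof (intro exI conjI allI impI)
    show "0 < c" "c < pi/2" by fact+
  next
    fix a assume a: "0 < a" "a < c"
    have "cos a > cos c" using a \<open>c < pi/2\<close> cos_mono_less_eq[of c a] by auto
    moreover have "cos a > 0" using a \<open>c < pi/2\<close> by (intro cos_gt_zero) auto
    moreover have "1/y > 0" using y \<open>y \<noteq> 0\<close> by simp
    ultimately have h1: "cos a - y > 0" and h2: "2 * cos a + 1/y > 0" unfolding cc by linarith+
    show "t * gd t e a > 0" unfolding key using mult_pos_pos[OF mult_pos_pos[OF tt h1] h2] .
  next
    fix a assume a: "c < a" "a < pi/2"
    have "cos a < cos c" using a \<open>0 < c\<close> cos_mono_less_eq[of a c] by auto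
    moreover have "cos a > 0" using a \<open>0 < c\<close> by (intro cos_gt_zero) auto
    moreover have "1/y > 0" using y \<open>y \<noteq> 0\<close> by simp
    ultimately have h1: "cos a - y < 0" and h2: "2 * cos a + 1/y > 0" unfolding cc by linarith+
    show "t * gd t e a < 0" unfolding key using mult_neg_pos[OF mult_pos_neg[OF tt h1] h2] .
  qed
qed

lemma root_inc:
  fixes f :: "real \<Rightarrow> real"
  assumes ab: "a \<le> b" and inc: "\<And>x y. a \<le> x \<Longrightarrow> x < y \<Longrightarrow> y \<le> b \<Longrightarrow> f x < f y"
    and cont: "continuous_on {a..b} f" and "f a < v" "v < f b"
  shows "\<exists>r. a < r \<and> r < b \<and> f r = v \<and> (\<forall>x. a \<le> x \<longrightarrow> x \<le> b \<longrightarrow> f x = v \<longrightarrow> x = r)"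
proof -
  obtain r where r: "a \<le> r" "r \<le> b" "f r = v"
    using IVT'[of f a v b, OF less_imp_le[OF assms(4)] less_imp_le[OF assms(5)] ab cont] by blast
  have "r \<noteq> a" "r \<noteq> b" using r assms(4,5) by auto
  have uq: "\<forall>x. a \<le> x \<longrightarrow> x \<le> b \<longrightarrow> f x = v \<longrightarrow> x = r"
  proof (intro allI impI)
    fix x assume x: "a \<le> x" "x \<le> b" "f x = v"
    show "x = r"
    proof (rule ccontr)
      assume "x \<noteq> r"
      then consider "x < r" | "r < x" by linarith
      then show False
      proof cases
        case 1 then show False using inc[OF x(1) 1 r(2)] x r by simp
      next
        case 2 then show False using inc[OF r(1) 2 x(2)] x r by simp
      qed
    qed
  qed
  have "a < r" "r < b" using r \<open>r \<noteq> a\<close> \<open>r \<noteq> b\<close> by linarith+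
  then show ?thesis using r(3) uq by blast
qed

lemma root_dec:
  fixes f :: "real \<Rightarrow> real"
  assumes ab: "a \<le> b" and dec: "\<And>x y. a \<le> x \<Longrightarrow> x < y \<Longrightarrow> y \<le> b \<Longrightarrow> f x > f y"
    and cont: "continuous_on {a..b} f" and "f a > v" "v > f b"
  shows "\<exists>r. a < r \<and> r < b \<and> f r = v \<and> (\<forall>x. a \<le> x \<longrightarrow> x \<le> b \<longrightarrow> f x = v \<longrightarrow> x = r)"
proof -
  have c2: "continuous_on {a..b} (\<lambda>x. - f x)" using cont by (intro continuous_intros)
  have i2: "\<And>x y. a \<le> x \<Longrightarrow> x < y \<Longrightarrow> y \<le> b \<Longrightarrow> - f x < - f y" using dec by simp
  have "- f a < - v" "- v < - f b" using assms(4,5) by auto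
  from root_inc[of a b "\<lambda>x. - f x" "-v", OF ab i2 c2 this]
  obtain r where r: "a < r" "r < b" "- f r = - v" and uq: "\<forall>x. a \<le> x \<longrightarrow> x \<le> b \<longrightarrow> - f x = - v \<longrightarrow> x = r"
    by blast
  have "f r = v" using r(3) by simp
  moreover have "\<forall>x. a \<le> x \<longrightarrow> x \<le> b \<longrightarrow> f x = v \<longrightarrow> x = r"
  proof (intro allI impI)
    fix x assume "a \<le> x" "x \<le> b" "f x = v"
    moreover then have "- f x = - v" by simp
    ultimately show "x = r" using uq by blast
  qed
  ultimately show ?thesis using r(1,2) by blast
qed

lemma sg1: "(t::real) > 0 \<Longrightarrow> t * g > 0 \<Longrightarrow> g > 0" by (auto simp: zero_less_mult_iff)
lemma sg2: "(t::real) > 0 \<Longrightarrow> t * g < 0 \<Longrightarrow> g < 0" by (auto simp: mult_less_0_iff)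
lemma sg3: "(t::real) < 0 \<Longrightarrow> t * g > 0 \<Longrightarrow> g < 0" by (auto simp: zero_less_mult_iff)
lemma sg4: "(t::real) < 0 \<Longrightarrow> t * g < 0 \<Longrightarrow> g > 0" by (auto simp: mult_less_0_iff)

definition ZZ :: "real \<Rightarrow> real \<Rightarrow> real \<Rightarrow> real set" where
  "ZZ q t e = {a. 0 < a \<and> a < pi/2 \<and> gg t e a = q}"

lemma gg_0 [simp]: "gg t e 0 = 0" and gg_pi2 [simp]: "gg t e (pi/2) = e"
  by (auto simp: gg_def)

lemma case_pos_plus:
  assumes "t > 0" "0 < q" "q < 1"
  shows "\<exists>r. ZZ q t 1 = {r}"
proof -
  obtain c where c: "0 < c" "c < pi/2" "\<And>a. 0 < a \<Longrightarrow> a < c \<Longrightarrow> t * gd t 1 a > 0"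
    "\<And>a. c < a \<Longrightarrow> a < pi/2 \<Longrightarrow> t * gd t 1 a < 0"
  proof -
    have "t \<noteq> 0" "t * (t + 1) > 0" using assms by auto
    from crit[OF this] show ?thesis using that by blast
  qed
  have inc: "gg t 1 x < gg t 1 y" if "0 \<le> x" "x < y" "y \<le> c" for x y
    by (rule inc_from_deriv[OF gg_deriv _ that]) (simp add: sg1[OF assms(1) c(3)])
  have dec: "gg t 1 x > gg t 1 y" if "c \<le> x" "x < y" "y \<le> pi/2" for x y
    by (rule dec_from_deriv[OF gg_deriv _ that]) (simp add: sg2[OF assms(1) c(4)])
  have big: "gg t 1 x > q" if "c \<le> x" "x < pi/2" for x
  proof -
    have "gg t 1 x > gg t 1 (pi/2)" using dec[OF that order_refl] .
    then show ?thesis using assms(3) by simp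
  qed
  have "gg t 1 c > q" using big c by simp
  then obtain r where r: "0 < r" "r < c" "gg t 1 r = q" and u: "\<forall>x. 0 \<le> x \<longrightarrow> x \<le> c \<longrightarrow> gg t 1 x = q \<longrightarrow> x = r"
  proof -
    have "0 \<le> c" "gg t 1 0 < q" using c assms by auto
    from root_inc[of 0 c "gg t 1" q, OF this(1) inc gg_cont this(2) \<open>gg t 1 c > q\<close>]
    show ?thesis using that by blast
  qed
  have "ZZ q t 1 = {r}"
  proof (intro equalityI subsetI)
    fix x assume "x \<in> ZZ q t 1"
    then have x: "0 < x" "x < pi/2" "gg t 1 x = q" by (auto simp: ZZ_def)
    show "x \<in> {r}"
    proof (cases "x \<le> c")
      case True then show ?thesis using u[rule_format, of x] x by simp
    next
      case False then show ?thesis using big[of x] x by simp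
    qed
  next
    fix x assume "x \<in> {r}" then show "x \<in> ZZ q t 1" using r c by (simp add: ZZ_def)
  qed
  then show ?thesis by blast
qed

lemma case_neg_plus:
  assumes "t < -1" "0 < q" "q < 1"
  shows "\<exists>r. ZZ q t 1 = {r}"
proof -
  have t0: "t < 0" using assms by simp
  obtain c where c: "0 < c" "c < pi/2" "\<And>a. 0 < a \<Longrightarrow> a < c \<Longrightarrow> t * gd t 1 a > 0"
    "\<And>a. c < a \<Longrightarrow> a < pi/2 \<Longrightarrow> t * gd t 1 a < 0"
  proof -
    have "t \<noteq> 0" "t * (t + 1) > 0" using assms by (auto intro: mult_neg_neg)
    from crit[OF this] show ?thesis using that by blast
  qed
  have dec: "gg t 1 x > gg t 1 y" if "0 \<le> x" "x < y" "y \<le> c" for x y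
    by (rule dec_from_deriv[OF gg_deriv _ that]) (simp add: sg3[OF t0 c(3)])
  have inc: "gg t 1 x < gg t 1 y" if "c \<le> x" "x < y" "y \<le> pi/2" for x y
    by (rule inc_from_deriv[OF gg_deriv _ that]) (simp add: sg4[OF t0 c(4)])
  have small: "gg t 1 x < 0" if "0 < x" "x \<le> c" for x
    using dec[of 0 x] that by simp
  have "gg t 1 c < q" using small[of c] c assms by simp
  then obtain r where r: "c < r" "r < pi/2" "gg t 1 r = q" and u: "\<forall>x. c \<le> x \<longrightarrow> x \<le> pi/2 \<longrightarrow> gg t 1 x = q \<longrightarrow> x = r"
  proof -
    have "c \<le> pi/2" "q < gg t 1 (pi/2)" using c assms by auto
    from root_inc[of c "pi/2" "gg t 1" q, OF this(1) inc gg_cont \<open>gg t 1 c < q\<close> this(2)]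
    show ?thesis using that by blast
  qed
  have "ZZ q t 1 = {r}"
  proof (intro equalityI subsetI)
    fix x assume "x \<in> ZZ q t 1"
    then have x: "0 < x" "x < pi/2" "gg t 1 x = q" by (auto simp: ZZ_def)
    show "x \<in> {r}"
    proof (cases "x \<le> c")
      case True then show ?thesis using small[of x] x assms by simp
    next
      case False then show ?thesis using u[rule_format, of x] x by simp
    qed
  next
    fix x assume "x \<in> {r}" then show "x \<in> ZZ q t 1" using r c by (simp add: ZZ_def)
  qed
  then show ?thesis by blast
qed

lemma case_zero_plus:
  assumes "0 < q" "q < 1"
  shows "ZZ q 0 1 = {arcsin q}"
proof (intro equalityI subsetI)
  fix x assume "x \<in> ZZ q 0 1"
  then have x: "0 < x" "x < pi/2" "sin x = q" by (auto simp: ZZ_def gg_def)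
  then have "arcsin (sin x) = x" by (intro arcsin_sin) auto
  then show "x \<in> {arcsin q}" using x by simp
next
  fix x assume "x \<in> {arcsin q}"
  then have x: "x = arcsin q" by simp
  have "arcsin 0 < arcsin q" using assms by (intro arcsin_less_arcsin) auto
  moreover have "arcsin q < pi/2" using arcsin_lt_bounded[of q] assms by auto
  ultimately show "x \<in> ZZ q 0 1" using x assms by (simp add: ZZ_def gg_def)
qed

lemma case_minus_nonpos:
  assumes "t \<le> 0" "0 < q"
  shows "ZZ q t (-1) = {}"
proof -
  have "gg t (-1) x < q" if "0 < x" "x < pi/2" for x
  proof -
    have "sin x > 0" "cos x > 0" using that by (auto intro: sin_gt_zero cos_gt_zero)
    have "t * cos x \<le> 0" using mult_nonpos_nonneg[of t "cos x"] assms(1) \<open>cos x > 0\<close> by simp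
    then have "t * cos x - 1 < 0" by simp
    then have "gg t (-1) x < 0" using \<open>sin x > 0\<close> by (simp add: gg_def mult_neg_pos)
    then show ?thesis using assms by simp
  qed
  then show ?thesis by (force simp: ZZ_def)
qed

lemma case_pos_minus:
  assumes "t > 1" "0 < q" "0 < a0" "a0 < pi/2" "gg t (-1) a0 > q"
  shows "\<exists>r1 r2. r1 < r2 \<and> ZZ q t (-1) = {r1, r2}"
proof -
  obtain c where c: "0 < c" "c < pi/2" "\<And>a. 0 < a \<Longrightarrow> a < c \<Longrightarrow> t * gd t (-1) a > 0"
    "\<And>a. c < a \<Longrightarrow> a < pi/2 \<Longrightarrow> t * gd t (-1) a < 0"
  proof -
    have "t \<noteq> 0" "t * (t + -1) > 0" using assms by auto
    from crit[OF this] show ?thesis using that by blast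
  qed
  have t0: "t > 0" using assms by simp
  have inc: "gg t (-1) x < gg t (-1) y" if "0 \<le> x" "x < y" "y \<le> c" for x y
    by (rule inc_from_deriv[OF gg_deriv _ that]) (simp add: sg1[OF t0 c(3)])
  have dec: "gg t (-1) x > gg t (-1) y" if "c \<le> x" "x < y" "y \<le> pi/2" for x y
    by (rule dec_from_deriv[OF gg_deriv _ that]) (simp add: sg2[OF t0 c(4)])
  have "gg t (-1) c \<ge> gg t (-1) a0"
  proof (cases "a0 < c")
    case True then show ?thesis using inc[of a0 c] assms by simp
  next
    case False
    then consider "a0 = c" | "c < a0" by linarith
    then show ?thesis
    proof cases
      case 2 then show ?thesis using dec[of c a0] assms by simp
    qed simp
  qed
  then have gc: "gg t (-1) c > q" using assms by simp
  obtain r1 where r1: "0 < r1" "r1 < c" "gg t (-1) r1 = q" and u1: "\<forall>x. 0 \<le> x \<longrightarrow> x \<le> c \<longrightarrow> gg t (-1) x = q \<longrightarrow> x = r1"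
  proof -
    have "0 \<le> c" "gg t (-1) 0 < q" using c assms by auto
    from root_inc[of 0 c "gg t (-1)" q, OF this(1) inc gg_cont this(2) gc]
    show ?thesis using that by blast
  qed
  obtain r2 where r2: "c < r2" "r2 < pi/2" "gg t (-1) r2 = q" and u2: "\<forall>x. c \<le> x \<longrightarrow> x \<le> pi/2 \<longrightarrow> gg t (-1) x = q \<longrightarrow> x = r2"
  proof -
    have "c \<le> pi/2" "q > gg t (-1) (pi/2)" using c assms by auto
    from root_dec[of c "pi/2" "gg t (-1)" q, OF this(1) dec gg_cont gc this(2)]
    show ?thesis using that by blast
  qed
  have "ZZ q t (-1) = {r1, r2}"
  proof (intro equalityI subsetI)
    fix x assume "x \<in> ZZ q t (-1)"
    then have x: "0 < x" "x < pi/2" "gg t (-1) x = q" by (auto simp: ZZ_def)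
    show "x \<in> {r1, r2}"
    proof (cases "x \<le> c")
      case True then show ?thesis using u1[rule_format, of x] x by simp
    next
      case False then show ?thesis using u2[rule_format, of x] x by simp
    qed
  next
    fix x assume "x \<in> {r1, r2}" then show "x \<in> ZZ q t (-1)" using r1 r2 c by (auto simp add: ZZ_def)
  qed
  moreover have "r1 < r2" using r1 r2 by simp
  ultimately show ?thesis by blast
qed

lemma q_o_alt: "q_o = (2 * ((1 + sqrt 33)/8) - 1) * sqrt (1 - ((1 + sqrt 33)/8)^2)"
proof -
  define s where "s = sqrt (33::real)"
  have s2: "s^2 = 33" unfolding s_def by simp
  have s5: "s > 5" unfolding s_def by (rule real_less_rsqrt) simp
  have e0: "sqrt (((s - 3)/4)^2) = (s - 3)/4" unfolding real_sqrt_abs using s5 by simp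
  have e1: "2 * ((1 + s)/8) - 1 = sqrt (((s - 3)/4)^2)" unfolding e0 by (simp add: field_simps)
  have "q_o = sqrt ((414 - 66 * s)/256)" unfolding q_o_def s_def by (simp add: real_sqrt_divide)
  also have "(414 - 66 * s)/256 = ((s - 3)/4)^2 * (1 - ((1 + s)/8)^2)"
    using s2 by (simp add: field_simps power2_eq_square)
  finally show ?thesis unfolding e1 s_def[symmetric] by (simp add: real_sqrt_mult)
qed

lemma q_o_lt1: "q_o < 1"
proof -
  have s5: "sqrt 33 > (5::real)" by (rule real_less_rsqrt) simp
  have "414 - 66 * sqrt 33 < (256::real)" using s5 by simp
  then have "sqrt (414 - 66 * sqrt 33) < sqrt 256" by (subst real_sqrt_less_iff) simp
  also have "sqrt 256 = (16::real)" by (simp add: real_sqrt_unique[of 16])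
  finally show ?thesis unfolding q_o_def by simp
qed

lemma exists_big:
  assumes "t \<ge> 2" "q < q_o"
  shows "\<exists>a0. 0 < a0 \<and> a0 < pi/2 \<and> gg t (-1) a0 > q"
proof -
  define x where "x = (1 + sqrt 33)/8"
  have s5: "sqrt 33 > (5::real)" by (rule real_less_rsqrt) simp
  have s7: "sqrt 33 < (7::real)" by (rule real_sqrt_less_mono[of 33 49, simplified]) 
  have x: "0 < x" "x < 1" "1/2 < x" unfolding x_def using s5 s7 by auto
  define a0 where "a0 = arccos x"
  have "0 < a0" unfolding a0_def using arccos_lt_bounded[of x] x by auto
  moreover have "a0 < pi/2" unfolding a0_def using arccos_less_arccos[of 0 x] x by auto
  moreover have "gg t (-1) a0 > q"
  proof -
    have sa: "sin a0 = sqrt (1 - x^2)" unfolding a0_def using x by (simp add: sin_arccos_abs)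
    have ca: "cos a0 = x" unfolding a0_def using x by simp
    have "x^2 \<le> 1" using x by (intro power_le_one) auto
    then have "sqrt (1 - x^2) \<ge> 0" by simp
    moreover have "t * x - 1 \<ge> 2 * x - 1" using assms(1) x by (simp add: mult_right_mono)
    ultimately have "(t * x - 1) * sqrt (1 - x^2) \<ge> (2 * x - 1) * sqrt (1 - x^2)"
      by (simp add: mult_right_mono)
    moreover have "(2 * x - 1) * sqrt (1 - x^2) = q_o" unfolding x_def q_o_alt ..
    ultimately show ?thesis unfolding gg_def sa ca using assms(2) by simp
  qed
  ultimately show ?thesis by blast
qed

lemma ZZ_card_plus:
  fixes j :: int
  assumes "0 < q" "q < q_o"
  shows "finite (ZZ q (2 * of_int j) 1) \<and> card (ZZ q (2 * of_int j) 1) = 1"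
proof -
  have q1: "q < 1" using assms q_o_lt1 by simp
  consider "j = 0" | "j > 0" | "j < 0" by linarith
  then obtain r where "ZZ q (2 * of_int j) 1 = {r}"
  proof cases
    case 1 then show ?thesis using that case_zero_plus[OF assms(1) q1] by simp
  next
    case 2 then have "2 * real_of_int j > 0" by simp
    then show ?thesis using that case_pos_plus[OF _ assms(1) q1] by blast
  next
    case 3 then have "2 * real_of_int j < -1" by simp
    then show ?thesis using that case_neg_plus[OF _ assms(1) q1] by blast
  qed
  then show ?thesis by simp
qed

lemma ZZ_card_minus:
  fixes j :: int
  assumes "0 < q" "q < q_o"
  shows "finite (ZZ q (2 * of_int j) (-1)) \<and> card (ZZ q (2 * of_int j) (-1)) = (if j > 0 then 2 else 0)"
proof (cases "j > 0")
  case True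
  then have t: "2 * real_of_int j \<ge> 2" "2 * real_of_int j > 1" by simp_all
  obtain a0 where "0 < a0" "a0 < pi/2" "gg (2 * real_of_int j) (-1) a0 > q"
    using exists_big[OF t(1) assms(2)] by blast
  from case_pos_minus[OF t(2) assms(1) this] obtain r1 r2 where
    "r1 < r2" "ZZ q (2 * real_of_int j) (-1) = {r1, r2}" by blast
  then show ?thesis using True by simp
next
  case False
  then have "2 * real_of_int j \<le> 0" by simp
  from case_minus_nonpos[OF this assms(1)] show ?thesis using False by simp
qed

lemma eq_sum_form:
  fixes th :: "real list" and N :: nat
  assumes "N > 0"
  shows "(1 / real N) * (\<Sum>\<mu><N. real N * real N * sin (th ! \<nu> - th ! \<mu>))
     = real N * (sin (th ! \<nu>) * (\<Sum>\<mu><N. cos (th ! \<mu>)) - cos (th ! \<nu>) * (\<Sum>\<mu><N. sin (th ! \<mu>)))"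
proof -
  have "(\<Sum>\<mu><N. real N * real N * sin (th ! \<nu> - th ! \<mu>))
      = real N * real N * (\<Sum>\<mu><N. sin (th ! \<nu>) * cos (th ! \<mu>) - cos (th ! \<nu>) * sin (th ! \<mu>))"
    by (simp add: sin_diff sum_distrib_left)
  also have "\<dots> = real N * real N * (sin (th ! \<nu>) * (\<Sum>\<mu><N. cos (th ! \<mu>)) - cos (th ! \<nu>) * (\<Sum>\<mu><N. sin (th ! \<mu>)))"
    by (simp add: sum_subtractf sum_distrib_left)
  finally show ?thesis using assms by simp
qed

lemma complex_sum_form:
  fixes th :: "real list" and N :: nat
  shows "(\<Sum>\<mu><N. complex_of_real (real N) * exp (\<i> * complex_of_real (th ! \<mu>)))
     = Complex (real N * (\<Sum>\<mu><N. cos (th ! \<mu>))) (real N * (\<Sum>\<mu><N. sin (th ! \<mu>)))"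
proof (rule complex_eqI)
  have e: "exp (\<i> * complex_of_real x) = cis x" for x by (simp add: cis_conv_exp)
  show "Re (\<Sum>\<mu><N. complex_of_real (real N) * exp (\<i> * complex_of_real (th ! \<mu>))) =
    Re (Complex (real N * (\<Sum>\<mu><N. cos (th ! \<mu>))) (real N * (\<Sum>\<mu><N. sin (th ! \<mu>))))"
    by (simp add: e Re_sum sum_distrib_left)
  show "Im (\<Sum>\<mu><N. complex_of_real (real N) * exp (\<i> * complex_of_real (th ! \<mu>))) =
    Im (Complex (real N * (\<Sum>\<mu><N. cos (th ! \<mu>))) (real N * (\<Sum>\<mu><N. sin (th ! \<mu>))))"
    by (simp add: e Im_sum sum_distrib_left)
qed

lemma complex_nonneg_iff:
  "Complex x y \<in> complex_of_real ` {0..} \<longleftrightarrow> y = 0 \<and> x \<ge> 0"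
proof
  assume "Complex x y \<in> complex_of_real ` {0..}"
  then obtain r where "r \<ge> 0" "Complex x y = complex_of_real r" by auto
  then show "y = 0 \<and> x \<ge> 0" by (simp add: complex_eq_iff)
next
  assume "y = 0 \<and> x \<ge> 0"
  then have "Complex x y = complex_of_real x" by (simp add: complex_eq_iff)
  then show "Complex x y \<in> complex_of_real ` {0..}" using \<open>y = 0 \<and> x \<ge> 0\<close> by auto
qed

lemma kur_iff:
  fixes N :: nat
  assumes "N > 0"
  shows "th \<in> kuramoto_equilibria N w (\<lambda>_. real N) \<longleftrightarrow>
    length th = N \<and> (\<forall>\<nu><N. -pi < th ! \<nu> \<and> th ! \<nu> \<le> pi)
    \<and> (\<forall>\<nu><N. w \<nu> = real N * (sin (th ! \<nu>) * (\<Sum>\<mu><N. cos (th ! \<mu>)) - cos (th ! \<nu>) * (\<Sum>\<mu><N. sin (th ! \<mu>))))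
    \<and> (\<Sum>\<mu><N. sin (th ! \<mu>)) = 0 \<and> (\<Sum>\<mu><N. cos (th ! \<mu>)) \<ge> 0"
proof -
  have "(real N * (\<Sum>\<mu><N. sin (th ! \<mu>)) = 0 \<and> real N * (\<Sum>\<mu><N. cos (th ! \<mu>)) \<ge> 0)
      \<longleftrightarrow> ((\<Sum>\<mu><N. sin (th ! \<mu>)) = 0 \<and> (\<Sum>\<mu><N. cos (th ! \<mu>)) \<ge> 0)"
    using assms by (simp add: zero_le_mult_iff)
  then show ?thesis
    unfolding kuramoto_equilibria_def mem_Collect_eq eq_sum_form[OF assms] complex_sum_form complex_nonneg_iff
    by blast
qed

section \<open>Parametrisation\<close>

definition sg :: "bool \<Rightarrow> real" where "sg e = (if e then 1 else -1)"

definition thv :: "nat \<Rightarrow> nat set \<Rightarrow> bool \<Rightarrow> real \<Rightarrow> nat \<Rightarrow> real" where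
  "thv m A e a \<nu> = (if \<nu> < m then (if \<nu> \<in> A then a else pi - a)
     else if \<nu> < 2*m then (if \<nu> \<in> A then - a else a - pi) else (if e then 0 else pi))"

definition th :: "nat \<Rightarrow> nat set \<Rightarrow> bool \<Rightarrow> real \<Rightarrow> real list" where
  "th m A e a = map (thv m A e a) [0..<Suc (2*m)]"

lemma th_len [simp]: "length (th m A e a) = Suc (2*m)" by (simp add: th_def)
lemma th_nth [simp]: "\<nu> < Suc (2*m) \<Longrightarrow> th m A e a ! \<nu> = thv m A e a \<nu>"
  by (simp add: th_def del: upt_Suc)

lemma cos_thv: "\<nu> < 2*m \<Longrightarrow> cos (thv m A e a \<nu>) = (if \<nu> \<in> A then cos a else - cos a)"
  by (simp add: thv_def cos_diff)
lemma cos_thv_last: "cos (thv m A e a (2*m)) = sg e"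
  by (simp add: thv_def sg_def)
lemma sin_thv: "\<nu> < 2*m \<Longrightarrow> sin (thv m A e a \<nu>) = (if \<nu> < m then sin a else - sin a)"
  by (simp add: thv_def sin_diff)
lemma sin_thv_last: "sin (thv m A e a (2*m)) = 0"
  by (simp add: thv_def)

lemma sum_cos_th:
  assumes "A \<subseteq> {..<2*m}"
  shows "(\<Sum>\<mu><Suc (2*m). cos (th m A e a ! \<mu>)) = (2 * real (card A) - 2 * real m) * cos a + sg e"
proof -
  have "(\<Sum>\<mu><Suc (2*m). cos (th m A e a ! \<mu>)) = (\<Sum>\<mu><2*m. cos (thv m A e a \<mu>)) + sg e"
    by (simp add: cos_thv_last del: upt_Suc)
  also have "(\<Sum>\<mu><2*m. cos (thv m A e a \<mu>)) = (\<Sum>\<mu><2*m. if \<mu> \<in> A then cos a else - cos a)"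
    by (rule sum.cong) (simp_all add: cos_thv)
  also have "\<dots> = (\<Sum>\<mu>\<in>{..<2*m} \<inter> A. cos a) + (\<Sum>\<mu>\<in>{..<2*m} - A. - cos a)"
    by (simp add: sum.If_cases Diff_eq)
  also have "\<dots> = real (card A) * cos a - real (2*m - card A) * cos a"
    using assms by (simp add: Int_absorb1 card_Diff_subset finite_subset)
  also have "real (2*m - card A) = 2 * real m - real (card A)"
    using card_mono[OF _ assms] by (simp add: of_nat_diff)
  finally show ?thesis by (simp add: algebra_simps)
qed

lemma sum_sin_th:
  shows "(\<Sum>\<mu><Suc (2*m). sin (th m A e a ! \<mu>)) = 0"
proof -
  have "(\<Sum>\<mu><Suc (2*m). sin (th m A e a ! \<mu>)) = (\<Sum>\<mu><2*m. sin (thv m A e a \<mu>))"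
    by (simp add: sin_thv_last del: upt_Suc)
  also have "\<dots> = (\<Sum>\<mu><2*m. if \<mu> < m then sin a else - sin a)"
    by (rule sum.cong) (simp_all add: sin_thv)
  also have "\<dots> = (\<Sum>\<mu>\<in>{..<2*m} \<inter> {..<m}. sin a) + (\<Sum>\<mu>\<in>{..<2*m} - {..<m}. - sin a)"
    by (simp add: sum.If_cases Diff_eq flip: lessThan_def)
  also have "{..<2*m} \<inter> {..<m} = {..<m}" by auto
  also have "{..<2*m} - {..<m} = {m..<2*m}" by auto
  finally show ?thesis by simp
qed

abbreviation EQ :: "nat \<Rightarrow> real \<Rightarrow> real list set" where
  "EQ m q \<equiv> kuramoto_equilibria (Suc (2*m)) (omega_alt (Suc (2*m)) q) (\<lambda>_. real (Suc (2*m)))"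

definition tA :: "nat \<Rightarrow> nat set \<Rightarrow> real" where
  "tA m A = 2 * real (card A) - 2 * real m"

lemma omega_alt_simp: "omega_alt (Suc (2*m)) q \<nu> =
   (if \<nu> < m then real (Suc (2*m)) * q else if \<nu> < 2*m then - (real (Suc (2*m)) * q) else 0)"
  unfolding omega_alt_def by simp

lemma th_in_EQ:
  assumes "0 < q" "A \<subseteq> {..<2*m}" "a \<in> ZZ q (tA m A) (sg e)"
  shows "th m A e a \<in> EQ m q"
proof -
  define C where "C = tA m A * cos a + sg e"
  have a: "0 < a" "a < pi/2" and Cq: "C * sin a = q" using assms(3) by (auto simp: ZZ_def gg_def C_def)
  have sa: "sin a > 0" using a by (intro sin_gt_zero) auto
  have C0: "C > 0" using Cq sa assms(1) by (metis zero_less_mult_pos2)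
  have sc: "(\<Sum>\<mu><Suc (2*m). cos (th m A e a ! \<mu>)) = C"
    unfolding C_def tA_def using sum_cos_th[OF assms(2)] by simp
  show ?thesis
  proof (subst kur_iff, simp, unfold sc sum_sin_th, intro conjI allI impI)
    show "length (th m A e a) = Suc (2*m)" by simp
  next
    fix \<nu> assume "\<nu> < Suc (2*m)"
    then show "- pi < th m A e a ! \<nu>" "th m A e a ! \<nu> \<le> pi"
      using a pi_gt_zero by (auto simp: thv_def)
  next
    fix \<nu> assume \<nu>: "\<nu> < Suc (2*m)"
    show "omega_alt (Suc (2*m)) q \<nu> = real (Suc (2*m)) * (sin (th m A e a ! \<nu>) * C - cos (th m A e a ! \<nu>) * 0)"
    proof (cases "\<nu> < 2*m")
      case True
      then show ?thesis unfolding omega_alt_simp using \<nu> Cq by (simp add: sin_thv mult.commute)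
    next
      case False
      then have "\<nu> = 2*m" using \<nu> by simp
      then show ?thesis by (simp add: omega_alt_simp sin_thv_last)
    qed
  qed (use C0 in simp_all)
qed

lemma sin_eq_cases:
  fixes x a :: real
  assumes "- pi \<le> x" "x \<le> pi" "0 < a" "a \<le> pi/2" "sin x = sin a"
  shows "x = a \<or> x = pi - a"
proof -
  have sa: "sin a > 0" using assms by (intro sin_gt_zero) auto
  have "x > 0"
  proof (rule ccontr)
    assume "\<not> x > 0"
    then have "sin (- x) \<ge> 0" using assms by (intro sin_ge_zero) auto
    then show False using sa assms(5) by simp
  qed
  have "x \<noteq> pi" using sa assms(5) by auto
  show ?thesis
  proof (cases "x \<le> pi/2")
    case True
    have "x = arcsin (sin x)" using True \<open>x > 0\<close> by (simp add: arcsin_sin)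
    also have "\<dots> = a" using assms by (simp add: arcsin_sin)
    finally show ?thesis by simp
  next
    case False
    have "pi - x = arcsin (sin (pi - x))" using False assms(2) by (intro arcsin_sin[symmetric]) auto
    also have "sin (pi - x) = sin x" by simp
    also have "arcsin (sin x) = a" using assms by (simp add: arcsin_sin)
    finally show ?thesis by simp
  qed
qed

lemma sin_zero_cases:
  fixes x :: real
  assumes "- pi < x" "x \<le> pi" "sin x = 0"
  shows "x = 0 \<or> x = pi"
  using sin_eq_0_pi[of x] assms by (cases "x = pi") auto

lemma EQ_is_th:
  assumes "m \<ge> 1" "0 < q" "q < 1" "\<theta> \<in> EQ m q"
  shows "\<exists>A e a. A \<subseteq> {..<2*m} \<and> a \<in> ZZ q (tA m A) (sg e) \<and> \<theta> = th m A e a"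
proof -
  define N where "N = Suc (2*m)"
  define C where "C = (\<Sum>\<mu><N. cos (\<theta> ! \<mu>))"
  have N0: "N > 0" "real N > 0" by (simp_all add: N_def)
  have H: "length \<theta> = N \<and> (\<forall>\<nu><N. - pi < \<theta> ! \<nu> \<and> \<theta> ! \<nu> \<le> pi)
    \<and> (\<forall>\<nu><N. omega_alt N q \<nu> = real N * (sin (\<theta> ! \<nu>) * C - cos (\<theta> ! \<nu>) * (\<Sum>\<mu><N. sin (\<theta> ! \<mu>))))
    \<and> (\<Sum>\<mu><N. sin (\<theta> ! \<mu>)) = 0 \<and> C \<ge> 0"
    using kur_iff[of "Suc (2*m)" \<theta> "omega_alt (Suc (2*m)) q"] assms(4) unfolding N_def C_def by blast
  then have len: "length \<theta> = N" and rng: "\<And>\<nu>. \<nu> < N \<Longrightarrow> - pi < \<theta> ! \<nu> \<and> \<theta> ! \<nu> \<le> pi"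
    and eqs: "\<And>\<nu>. \<nu> < N \<Longrightarrow> omega_alt N q \<nu> = real N * (sin (\<theta> ! \<nu>) * C - cos (\<theta> ! \<nu>) * (\<Sum>\<mu><N. sin (\<theta> ! \<mu>)))"
    and ss: "(\<Sum>\<mu><N. sin (\<theta> ! \<mu>)) = 0" and C0: "C \<ge> 0"
    by blast+
  have eq: "sin (\<theta> ! \<nu>) * C = (if \<nu> < m then q else if \<nu> < 2*m then - q else 0)" if "\<nu> < N" for \<nu>
  proof -
    have o1: "omega_alt N q \<nu> = real N * (sin (\<theta> ! \<nu>) * C)"
      using eqs[OF that, unfolded ss] by simp
    have o2: "omega_alt N q \<nu> = real N * (if \<nu> < m then q else if \<nu> < 2*m then - q else 0)"
      unfolding N_def omega_alt_simp by simp
    have "real N * (sin (\<theta> ! \<nu>) * C) = real N * (if \<nu> < m then q else if \<nu> < 2*m then - q else 0)"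
      using trans[OF o1[symmetric] o2] .
    moreover have nz: "real N \<noteq> 0" using N0 by simp
    ultimately show ?thesis unfolding mult_left_cancel[OF nz] by blast
  qed
  have e0: "sin (\<theta> ! 0) * C = q" using eq[of 0] assms(1) by (simp add: N_def)
  then have "C \<noteq> 0" using assms(2) by auto
  then have Cp: "C > 0" using C0 by simp
  define s where "s = q / C"
  have s0: "s = sin (\<theta> ! 0)" unfolding s_def using e0 Cp by (simp add: field_simps)
  have sp: "s > 0" unfolding s_def using Cp assms(2) by simp
  have s1: "s \<le> 1" unfolding s0 by simp
  define a where "a = arcsin s"
  have sa: "sin a = s" unfolding a_def using sp s1 by simp
  have a0: "0 < a" unfolding a_def using arcsin_less_arcsin[of 0 s] sp s1 by simp
  have a1: "a \<le> pi/2" unfolding a_def using arcsin_bounded[of s] sp s1 by simp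
  have c1: "\<theta> ! \<nu> = a \<or> \<theta> ! \<nu> = pi - a" if "\<nu> < m" for \<nu>
  proof -
    have "\<nu> < N" using that by (simp add: N_def)
    then have "sin (\<theta> ! \<nu>) * C = q" using eq that by simp
    then have "sin (\<theta> ! \<nu>) = sin a" unfolding sa s_def using Cp by (simp add: field_simps)
    then show ?thesis using sin_eq_cases[of "\<theta> ! \<nu>" a] rng[OF \<open>\<nu> < N\<close>] a0 a1 by auto
  qed
  have c2: "\<theta> ! \<nu> = - a \<or> \<theta> ! \<nu> = a - pi" if "m \<le> \<nu>" "\<nu> < 2*m" for \<nu>
  proof -
    have "\<nu> < N" using that by (simp add: N_def)
    then have "sin (\<theta> ! \<nu>) * C = - q" using eq that by simp
    then have "sin (- (\<theta> ! \<nu>)) = sin a" unfolding sa s_def using Cp by (simp add: field_simps)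
    then have "- (\<theta> ! \<nu>) = a \<or> - (\<theta> ! \<nu>) = pi - a"
      using sin_eq_cases[of "- (\<theta> ! \<nu>)" a] rng[OF \<open>\<nu> < N\<close>] a0 a1 by auto
    then show ?thesis by auto
  qed
  have c3: "\<theta> ! (2*m) = 0 \<or> \<theta> ! (2*m) = pi"
  proof -
    have "2*m < N" by (simp add: N_def)
    then have "sin (\<theta> ! (2*m)) * C = 0" using eq by simp
    then have "sin (\<theta> ! (2*m)) = 0" using Cp by simp
    then show ?thesis using sin_zero_cases rng[OF \<open>2*m < N\<close>] by blast
  qed
  define A where "A = {\<nu>. \<nu> < 2*m \<and> ((\<nu> < m \<and> \<theta> ! \<nu> = a) \<or> (m \<le> \<nu> \<and> \<theta> ! \<nu> = - a))}"
  define e where "e = (\<theta> ! (2*m) = 0)"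
  have AS: "A \<subseteq> {..<2*m}" by (auto simp: A_def)
  have th_eq: "\<theta> = th m A e a"
  proof (rule nth_equalityI)
    show "length \<theta> = length (th m A e a)" using len by (simp add: N_def)
  next
    fix \<nu> assume "\<nu> < length \<theta>"
    then have \<nu>: "\<nu> < Suc (2*m)" using len by (simp add: N_def)
    consider "\<nu> < m" | "m \<le> \<nu>" "\<nu> < 2*m" | "\<nu> = 2*m" using \<nu> by linarith
    then show "\<theta> ! \<nu> = th m A e a ! \<nu>"
    proof cases
      case 1 then show ?thesis using c1[OF 1] \<nu> by (auto simp: thv_def A_def)
    next
      case 2 then show ?thesis using c2[OF 2] \<nu> by (auto simp: thv_def A_def)
    next
      case 3 then show ?thesis using c3 \<nu> by (auto simp: thv_def e_def)
    qed
  qed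
  have Cth: "C = tA m A * cos a + sg e"
    unfolding C_def N_def th_eq sum_cos_th[OF AS] tA_def by simp
  have "a \<noteq> pi/2"
  proof
    assume "a = pi/2"
    then have "cos a = 0" by (simp only: cos_pi_half)
    then have "C = sg e" unfolding Cth by simp
    moreover have "C * s = q" unfolding s_def using Cp by simp
    moreover have "s = 1" using sa \<open>a = pi/2\<close> by simp
    ultimately show False using assms(2,3) by (auto simp: sg_def split: if_splits)
  qed
  then have "a \<in> ZZ q (tA m A) (sg e)"
    using a0 a1 Cp unfolding ZZ_def gg_def mem_Collect_eq Cth[symmetric] sa s_def by simp
  then show ?thesis using AS th_eq by blast
qed

lemma th_recover:
  assumes "m \<ge> 1" "0 < a" "a < pi/2"
  shows "arcsin (sin (th m A e a ! 0)) = a"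
    and "\<nu> < 2*m \<Longrightarrow> \<nu> \<in> A \<longleftrightarrow> th m A e a ! \<nu> = (if \<nu> < m then a else - a)"
    and "e \<longleftrightarrow> th m A e a ! (2*m) = 0"
proof -
  have "sin (th m A e a ! 0) = sin a" using assms(1) by (simp add: thv_def)
  then show "arcsin (sin (th m A e a ! 0)) = a" using assms by (simp add: arcsin_sin)
next
  assume "\<nu> < 2*m"
  then show "\<nu> \<in> A \<longleftrightarrow> th m A e a ! \<nu> = (if \<nu> < m then a else - a)"
    using assms by (auto simp: thv_def)
next
  show "e \<longleftrightarrow> th m A e a ! (2*m) = 0" by (simp add: thv_def)
qed

lemma th_inj:
  assumes "m \<ge> 1" "A \<subseteq> {..<2*m}" "A' \<subseteq> {..<2*m}" "0 < a" "a < pi/2" "0 < a'" "a' < pi/2"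
    and eq: "th m A e a = th m A' e' a'"
  shows "A = A' \<and> e = e' \<and> a = a'"
proof -
  have aa: "a = a'" using th_recover(1)[OF assms(1,4,5), of A e] th_recover(1)[OF assms(1,6,7), of A' e'] eq
    by simp
  have "A = A'"
  proof (intro equalityI subsetI)
    fix x assume "x \<in> A"
    then have "x < 2*m" using assms(2) by auto
    have h: "th m A e a ! x = th m A' e' a' ! x" by (simp only: eq)
    then show "x \<in> A'" using th_recover(2)[OF assms(1,4,5) \<open>x < 2*m\<close>, of A e]
      th_recover(2)[OF assms(1,6,7) \<open>x < 2*m\<close>, of A' e'] aa \<open>x \<in> A\<close> by (simp del: th_nth)
  next
    fix x assume "x \<in> A'"
    then have "x < 2*m" using assms(3) by auto
    have h: "th m A e a ! x = th m A' e' a' ! x" by (simp only: eq)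
    then show "x \<in> A" using th_recover(2)[OF assms(1,4,5) \<open>x < 2*m\<close>, of A e]
      th_recover(2)[OF assms(1,6,7) \<open>x < 2*m\<close>, of A' e'] aa \<open>x \<in> A'\<close> by (simp del: th_nth)
  qed
  moreover have "e = e'"
  proof -
    have h: "th m A e a ! (2*m) = th m A' e' a' ! (2*m)" by (simp only: eq)
    then show ?thesis using th_recover(3)[OF assms(1,4,5), where A=A and e=e] th_recover(3)[OF assms(1,6,7), where A=A' and e=e']
      by (simp del: th_nth)
  qed
  ultimately show ?thesis using aa by simp
qed

definition VV :: "nat \<Rightarrow> real \<Rightarrow> ((nat set \<times> bool) \<times> real) set" where
  "VV m q = (SIGMA p:(Pow {..<2*m} \<times> UNIV). ZZ q (tA m (fst p)) (sg (snd p)))"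

lemma EQ_image:
  assumes "m \<ge> 1" "0 < q" "q < 1"
  shows "EQ m q = (\<lambda>((A, e), a). th m A e a) ` VV m q"
proof (intro equalityI subsetI)
  fix x assume "x \<in> EQ m q"
  from EQ_is_th[OF assms this] obtain A e a where
    "A \<subseteq> {..<2*m}" "a \<in> ZZ q (tA m A) (sg e)" "x = th m A e a" by blast
  then show "x \<in> (\<lambda>((A, e), a). th m A e a) ` VV m q"
    by (auto simp: VV_def intro!: image_eqI[of _ _ "((A, e), a)"])
next
  fix x assume "x \<in> (\<lambda>((A, e), a). th m A e a) ` VV m q"
  then obtain A e a where "A \<subseteq> {..<2*m}" "a \<in> ZZ q (tA m A) (sg e)" "x = th m A e a"
    by (auto simp: VV_def)
  then show "x \<in> EQ m q" using th_in_EQ[OF assms(2)] by blast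
qed

lemma inj_VV:
  assumes "m \<ge> 1"
  shows "inj_on (\<lambda>((A, e), a). th m A e a) (VV m q)"
proof (rule inj_onI)
  fix x y assume x: "x \<in> VV m q" and y: "y \<in> VV m q"
    and eq: "(\<lambda>((A, e), a). th m A e a) x = (\<lambda>((A, e), a). th m A e a) y"
  obtain A e a where xx: "x = ((A, e), a)" by (metis prod.collapse)
  obtain A' e' a' where yy: "y = ((A', e'), a')" by (metis prod.collapse)
  have "A \<subseteq> {..<2*m}" "0 < a" "a < pi/2" using x unfolding xx by (auto simp: VV_def ZZ_def)
  moreover have "A' \<subseteq> {..<2*m}" "0 < a'" "a' < pi/2" using y unfolding yy by (auto simp: VV_def ZZ_def)
  moreover have "th m A e a = th m A' e' a'" using eq unfolding xx yy by simp
  ultimately have "A = A' \<and> e = e' \<and> a = a'" using th_inj[OF assms] by blast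
  then show "x = y" unfolding xx yy by simp
qed

lemma count_big:
  fixes m :: nat
  defines "S \<equiv> {..<2*m}"
  shows "2 * card {A \<in> Pow S. m < card A} + (2*m choose m) = 2^(2*m)"
proof -
  define G where "G = {A \<in> Pow S. m < card A}"
  define L where "L = {A \<in> Pow S. card A < m}"
  define M where "M = {A \<in> Pow S. card A = m}"
  have fS: "finite S" by (simp add: S_def)
  have cS: "card S = 2*m" by (simp add: S_def)
  have fin: "finite G" "finite L" "finite M" using fS by (auto simp: G_def L_def M_def)
  have "bij_betw (\<lambda>A. S - A) G L"
  proof (rule bij_betw_byWitness[where f'="\<lambda>A. S - A"])
    show "\<forall>a\<in>G. S - (S - a) = a" by (auto simp: G_def)
    show "\<forall>a\<in>L. S - (S - a) = a" by (auto simp: L_def)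
    show "(\<lambda>A. S - A) ` G \<subseteq> L"
    proof
      fix B assume "B \<in> (\<lambda>A. S - A) ` G"
      then obtain A where A: "A \<in> G" "B = S - A" by blast
      then have "A \<subseteq> S" "m < card A" by (auto simp: G_def)
      then have "card (S - A) = 2*m - card A" using fS cS by (simp add: card_Diff_subset finite_subset)
      moreover have "card A \<le> 2*m" using card_mono[OF fS \<open>A \<subseteq> S\<close>] cS by simp
      ultimately show "B \<in> L" using A \<open>m < card A\<close> by (auto simp: L_def)
    qed
    show "(\<lambda>A. S - A) ` L \<subseteq> G"
    proof
      fix B assume "B \<in> (\<lambda>A. S - A) ` L"
      then obtain A where A: "A \<in> L" "B = S - A" by blast
      then have "A \<subseteq> S" "card A < m" by (auto simp: L_def)
      then have "card (S - A) = 2*m - card A" using fS cS by (simp add: card_Diff_subset finite_subset)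
      then show "B \<in> G" using A \<open>card A < m\<close> by (auto simp: G_def)
    qed
  qed
  then have cGL: "card G = card L" by (rule bij_betw_same_card)
  have cM: "card M = 2*m choose m"
    unfolding M_def using n_subsets[OF fS, of m] cS by (simp add: Pow_def)
  have "Pow S = G \<union> L \<union> M" by (auto simp: G_def L_def M_def)
  moreover have d1: "G \<inter> L = {}" "(G \<union> L) \<inter> M = {}" by (auto simp: G_def L_def M_def)
  moreover have "card (G \<union> L \<union> M) = card G + card L + card M"
    using card_Un_disjoint[OF _ _ d1(1)] card_Un_disjoint[OF _ _ d1(2)] fin by simp
  ultimately have "card (Pow S) = card G + card L + card M" by simp
  moreover have "card (Pow S) = 2^(2*m)" using fS cS by (simp add: card_Pow)
  ultimately show ?thesis using cGL cM by (simp add: G_def)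
qed

lemma ZZ_info:
  assumes "0 < q" "q < q_o"
  shows "finite (ZZ q (tA m A) (sg e)) \<and> card (ZZ q (tA m A) (sg e)) = (if e then 1 else if m < card A then 2 else 0)"
proof -
  have tAj: "tA m A = 2 * of_int (int (card A) - int m)" by (simp add: tA_def)
  show ?thesis
  proof (cases e)
    case True then show ?thesis using ZZ_card_plus[OF assms, of "int (card A) - int m", folded tAj] by (simp add: sg_def)
  next
    case False
    have "(0 < int (card A) - int m) = (m < card A)" by linarith
    then show ?thesis using ZZ_card_minus[OF assms, of "int (card A) - int m", folded tAj] False
      by (simp add: sg_def)
  qed
qed

lemma card_VV:
  assumes "0 < q" "q < q_o"
  shows "card (VV m q) = 2^(2*m) + 2 * card {A \<in> Pow {..<2*m}. m < card A}"
proof -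
  define S where "S = {..<2*m}"
  have fS: "finite S" by (simp add: S_def)
  have "card (VV m q) = (\<Sum>p\<in>Pow S \<times> UNIV. card (ZZ q (tA m (fst p)) (sg (snd p))))"
    unfolding VV_def S_def[symmetric]
    by (rule card_SigmaI) (use fS ZZ_info[OF assms] in auto)
  also have "\<dots> = (\<Sum>p\<in>Pow S \<times> UNIV. (if snd p then 1 else if m < card (fst p) then 2 else 0))"
    by (rule sum.cong) (use ZZ_info[OF assms] in auto)
  also have "\<dots> = (\<Sum>A\<in>Pow S. \<Sum>e\<in>UNIV. (if e then 1 else if m < card A then 2 else 0))"
    by (subst sum.cartesian_product) (simp add: case_prod_beta)
  also have "\<dots> = (\<Sum>A\<in>Pow S. 1 + (if m < card A then 2 else 0))"
    by (simp add: UNIV_bool)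
  also have "\<dots> = (\<Sum>A\<in>Pow S. 1) + (\<Sum>A\<in>Pow S. (if m < card A then 2 else 0))"
    by (rule sum.distrib)
  also have "(\<Sum>A\<in>Pow S. (1::nat)) = card (Pow S)" by simp
  also have "(\<Sum>A\<in>Pow S. (if m < card A then 2 else 0)) = (\<Sum>A\<in>{A \<in> Pow S. m < card A}. (2::nat))"
    by (rule sum.inter_filter[symmetric]) (simp add: fS)
  also have "\<dots> = 2 * card {A \<in> Pow S. m < card A}" by simp
  also have "card (Pow S) = 2^(2*m)" using fS by (simp add: card_Pow S_def)
  finally show ?thesis by (simp add: S_def)
qed

theorem main_m:
  assumes "m \<ge> 1" "0 < q" "q < q_o"
  shows "finite (EQ m q) \<and> card (EQ m q) = 2^(Suc (2*m)) - (2*m choose m)"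
proof -
  have q1: "q < 1" using assms q_o_lt1 by simp
  have fV: "finite (VV m q)"
    unfolding VV_def by (rule finite_SigmaI) (use ZZ_info[OF assms(2,3)] in auto)
  have "card (EQ m q) = card (VV m q)"
    unfolding EQ_image[OF assms(1,2) q1] by (rule card_image[OF inj_VV[OF assms(1)]])
  also have "\<dots> = 2^(Suc (2*m)) - (2*m choose m)"
    unfolding card_VV[OF assms(2,3)] using count_big[of m] by simp
  finally show ?thesis using fV EQ_image[OF assms(1,2) q1] by simp
qed

theorem theorem5:
  fixes n :: nat and q :: real
  assumes "odd n" and "n \<ge> 3" and "0 < q" and "q < q_o"
  shows "finite (kuramoto_equilibria n (omega_alt n q) (\<lambda>_. real n))
     \<and> card (kuramoto_equilibria n (omega_alt n q) (\<lambda>_. real n))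
         = 2 ^ n - ((n - 1) choose ((n - 1) div 2))"
proof -
  obtain m where n: "n = Suc (2*m)" using assms(1) oddE by (metis Suc_eq_plus1)
  have m1: "m \<ge> 1" using assms(2) n by simp
  have "n - 1 = 2*m" "(n - 1) div 2 = m" using n by simp_all
  then show ?thesis using main_m[OF m1 assms(3,4)] unfolding n by simp
qed

end
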